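(* Let $\varphi$ be an automorphism of $E$ with $\varphi^2=\mathrm{id}_E$ and let $\beta=\{e_1,e_2,\ldots\}$ be a basis of $L$. Let $I=\{n\mid\varphi(e_n)=\pm e_n\}$, $I^+=\{i\in I\mid\varphi(e_i)=e_i\}$, $I^-=\{i\in I\mid\varphi(e_i)=-e_i\}$, $J=\mathbb{N}\setminus I$. (1) If $I^+$ is infinite, $I^-$ is finite with $|I^-|=k$, and $J$ is infinite, then $T_2(E_\varphi)\subseteq T_2(E_{k^\ast})$. (2) If $I^+$ is finite with $|I^+|=k$, $I^-$ is infinite and $J$ is infinite, then $T_2(E_\varphi)\subseteq T_2(E_k)$.
   Context: $F$ is a field of characteristic zero, $L$ an infinite-dimensional $F$-vector space with basis $e_1,e_2,\ldots$, $E$ its Grassmann algebra. For an automorphism $\varphi$ of $E$ of order dividing 2, $E_\varphi$ is the $\mathbb{Z}_2$-grading on $E$ by the eigenspaces of $\varphi$ for $1$ (degree 0) and $-1$ (degree 1). $E_k$ is the $\mathbb{Z}_2$-grading on $E$ where $e_1,\ldots,e_k$ have degree $0$ and all other $e_i$ degree $1$; $E_{k^\ast}$ is the grading where $e_1,\ldots,e_k$ have degree $1$ and all other $e_i$ degree $0$. $T_2(A)$ is the ideal of $\mathbb{Z}_2$-graded polynomial identities of a superalgebra $A$ in the free algebra $F\langle Y\cup Z\rangle$ ($Y$ even variables, $Z$ odd variables). *)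

theory Defs
  imports Main "HOL-Library.FSet" "HOL-Library.Poly_Mapping"
begin

text \<open>Grassmann algebra E over a field 'a: finitely supported F-linear combinations
of monomials e_S, S a finite set of generator indices (e_S = e_{s1}...e_{sm}, s1<...<sm).
Generators e_1, e_2, ... of the paper are indexed here by 0, 1, 2, ...\<close>

type_synonym 'a grass = "nat fset \<Rightarrow>\<^sub>0 'a"

definition gsign :: "nat fset \<Rightarrow> nat fset \<Rightarrow> 'a::field" where
  "gsign S T = (-1) ^ card {(s,t). s |\<in>| S \<and> t |\<in>| T \<and> t < s}"

definition gmult :: "'a::field grass \<Rightarrow> 'a grass \<Rightarrow> 'a grass" where
  "gmult x y = (\<Sum>S\<in>Poly_Mapping.keys x. \<Sum>T\<in>Poly_Mapping.keys y.
      if S |\<inter>| T = {||}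
      then Poly_Mapping.single (S |\<union>| T) (gsign S T * Poly_Mapping.lookup x S * Poly_Mapping.lookup y T)
      else 0)"

definition gone :: "'a::field grass" where
  "gone = Poly_Mapping.single {||} 1"

definition gsmult :: "'a::field \<Rightarrow> 'a grass \<Rightarrow> 'a grass" where
  "gsmult c x = gmult (Poly_Mapping.single {||} c) x"

definition gen :: "nat \<Rightarrow> 'a::field grass" where
  "gen n = Poly_Mapping.single {|n|} 1"

definition grass_aut :: "('a::field grass \<Rightarrow> 'a grass) \<Rightarrow> bool" where
  "grass_aut \<phi> \<longleftrightarrow> bij \<phi>
     \<and> (\<forall>x y. \<phi> (x + y) = \<phi> x + \<phi> y)
     \<and> (\<forall>c x. \<phi> (gsmult c x) = gsmult c (\<phi> x))
     \<and> (\<forall>x y. \<phi> (gmult x y) = gmult (\<phi> x) (\<phi> y))"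

text \<open>Free algebra F<Y \<union> Z>: Y even variables, Z odd variables.
Polynomials are finitely supported functions from words to coefficients.\<close>
datatype gvar = Yv nat | Zv nat

type_synonym 'a freepoly = "gvar list \<Rightarrow>\<^sub>0 'a"

definition gword :: "(gvar \<Rightarrow> 'a::field grass) \<Rightarrow> gvar list \<Rightarrow> 'a grass" where
  "gword \<sigma> w = foldr (\<lambda>v acc. gmult (\<sigma> v) acc) w gone"

definition geval :: "(gvar \<Rightarrow> 'a::field grass) \<Rightarrow> 'a freepoly \<Rightarrow> 'a grass" where
  "geval \<sigma> f = (\<Sum>w\<in>Poly_Mapping.keys f. gsmult (Poly_Mapping.lookup f w) (gword \<sigma> w))"

text \<open>T_2 of a Z_2-grading of E given by its homogeneous components A0 (even), A1 (odd).\<close>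
definition T2 :: "'a::field grass set \<Rightarrow> 'a grass set \<Rightarrow> 'a freepoly set" where
  "T2 A0 A1 = {f. \<forall>\<sigma>. (\<forall>i. \<sigma> (Yv i) \<in> A0) \<and> (\<forall>i. \<sigma> (Zv i) \<in> A1) \<longrightarrow> geval \<sigma> f = 0}"

definition Ephi0 :: "('a::field grass \<Rightarrow> 'a grass) \<Rightarrow> 'a grass set" where
  "Ephi0 \<phi> = {x. \<phi> x = x}"
definition Ephi1 :: "('a::field grass \<Rightarrow> 'a grass) \<Rightarrow> 'a grass set" where
  "Ephi1 \<phi> = {x. \<phi> x = - x}"

text \<open>Grading of E induced by declaring the generators with index in D odd and the rest even:
component of degree b is spanned by monomials e_S with |S \<inter> D| of parity b.\<close>
definition Edeg :: "nat set \<Rightarrow> bool \<Rightarrow> 'a::field grass set" where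
  "Edeg D b = {x. \<forall>S\<in>Poly_Mapping.keys x. odd (card (fset S \<inter> D)) = b}"

text \<open>E_k: e_1..e_k even, others odd (0-based indices 0..k-1 even).\<close>
definition Ek0 :: "nat \<Rightarrow> 'a::field grass set" where "Ek0 k = Edeg {k..} False"
definition Ek1 :: "nat \<Rightarrow> 'a::field grass set" where "Ek1 k = Edeg {k..} True"
text \<open>E_{k*}: e_1..e_k odd, others even.\<close>
definition Eks0 :: "nat \<Rightarrow> 'a::field grass set" where "Eks0 k = Edeg {..<k} False"
definition Eks1 :: "nat \<Rightarrow> 'a::field grass set" where "Eks1 k = Edeg {..<k} True"

end

theory Submission imports Defs "HOL-Library.Infinite_Set" begin

lemma pm_expand: "x = (\<Sum>T\<in>Poly_Mapping.keys x. Poly_Mapping.single T (Poly_Mapping.lookup x T))"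
proof (rule poly_mapping_eqI)
  fix U
  have "(\<Sum>T\<in>Poly_Mapping.keys x. Poly_Mapping.lookup (Poly_Mapping.single T (Poly_Mapping.lookup x T)) U)
      = (\<Sum>T\<in>Poly_Mapping.keys x. if T = U then Poly_Mapping.lookup x T else 0)"
    by (rule sum.cong) (auto simp: lookup_single when_def)
  also have "\<dots> = Poly_Mapping.lookup x U"
    by (simp add: in_keys_iff)
  finally show "Poly_Mapping.lookup x U = Poly_Mapping.lookup (\<Sum>T\<in>Poly_Mapping.keys x. Poly_Mapping.single T (Poly_Mapping.lookup x T)) U"
    by (simp add: lookup_sum)
qed

lemma gmult_single:
  "gmult (Poly_Mapping.single S a) (Poly_Mapping.single T b) =
   (if S |\<inter>| T = {||} then Poly_Mapping.single (S |\<union>| T) (gsign S T * a * b) else (0::'a::field grass))"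
  by (cases "a = 0"; cases "b = 0") (auto simp: gmult_def)

lemma gsign_empty1 [simp]: "gsign {||} T = 1" by (simp add: gsign_def)
lemma gsign_empty2 [simp]: "gsign S {||} = 1" by (simp add: gsign_def)

lemma gmult_gone_left: "gmult gone x = x"
proof -
  have "gmult gone x = (\<Sum>T\<in>Poly_Mapping.keys x. Poly_Mapping.single T (Poly_Mapping.lookup x T))"
    by (simp add: gmult_def gone_def)
  then show ?thesis using pm_expand[of x] by simp
qed

lemma gmult_gone_right: "gmult x gone = x"
proof -
  have "gmult x gone = (\<Sum>T\<in>Poly_Mapping.keys x. Poly_Mapping.single T (Poly_Mapping.lookup x T))"
    by (simp add: gmult_def gone_def)
  then show ?thesis using pm_expand[of x] by simp
qed

lemma gsmult_gone: "gsmult c gone = Poly_Mapping.single {||} c"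
  by (simp add: gsmult_def gone_def gmult_single)

lemma gsign_sq: "gsign S T * gsign S T = (1::'a::field)"
  by (simp add: gsign_def power_mult_distrib[symmetric] flip: power_add mult_2)


lemma phi_zero: fixes \<phi> :: "'a::field grass \<Rightarrow> 'a grass" assumes add: "\<forall>x y. \<phi> (x + y) = \<phi> x + \<phi> y" shows "\<phi> 0 = 0"
  using add[rule_format, of 0 0] by simp

lemma phi_sum: fixes \<phi> :: "'a::field grass \<Rightarrow> 'a grass" assumes add: "\<forall>x y. \<phi> (x + y) = \<phi> x + \<phi> y"
  shows "\<phi> (sum g A) = (\<Sum>a\<in>A. \<phi> (g a))"
  by (induction A rule: infinite_finite_induct) (auto simp: phi_zero[OF add] add)

lemma phi_gone:
  assumes mult: "\<forall>x y. \<phi> (gmult x y) = gmult (\<phi> x) (\<phi> y)" and inv: "\<forall>x. \<phi> (\<phi> x) = x"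
  shows "\<phi> gone = (gone :: 'a::field grass)"
proof -
  have "\<phi> (\<phi> gone) = \<phi> (gmult gone (\<phi> gone))" by (simp add: gmult_gone_left)
  also have "\<dots> = gmult (\<phi> gone) (\<phi> (\<phi> gone))" using mult by simp
  finally show ?thesis using inv by (simp add: gmult_gone_right)
qed

lemma phi_single:
  fixes \<phi> :: "'a::field grass \<Rightarrow> 'a grass"
  assumes mult: "\<forall>x y. \<phi> (gmult x y) = gmult (\<phi> x) (\<phi> y)" and inv: "\<forall>x. \<phi> (\<phi> x) = x"
    and sm: "\<forall>c x. \<phi> (gsmult c x) = gsmult c (\<phi> x)"
    and Ip: "\<forall>i\<in>Ip. \<phi> (gen i) = gen i" and Im: "\<forall>i\<in>Im. \<phi> (gen i) = - gen i"
  shows "fset U \<subseteq> Ip \<union> Im \<Longrightarrow> \<phi> (Poly_Mapping.single U c) = Poly_Mapping.single U ((-1) ^ card (fset U \<inter> Im) * c)"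
proof (induction U arbitrary: c rule: fset_induct_stronger)
  case empty
  have "\<phi> (Poly_Mapping.single {||} c) = \<phi> (gsmult c gone)" by (simp add: gsmult_gone)
  also have "\<dots> = gsmult c gone" using sm phi_gone[OF mult inv] by simp
  finally show ?case by (simp add: gsmult_gone)
next
  case (insert a U)
  define s :: 'a where "s = gsign {|a|} U"
  have ss: "s * s = 1" unfolding s_def by (rule gsign_sq)
  obtain e :: 'a where e: "\<phi> (gen a) = Poly_Mapping.single {|a|} e"
     and ee: "e = (if a \<in> Im then -1 else 1)"
  proof (cases "a \<in> Im")
    case True then show ?thesis using that Im by (auto simp: gen_def single_uminus)
  next
    case False then have "a \<in> Ip" using insert by auto
    then show ?thesis using that Ip False by (auto simp: gen_def)
  qed
  have dis: "{|a|} |\<inter>| U = {||}" using insert by auto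
  have eq1: "Poly_Mapping.single (finsert a U) c = gmult (gen a) (Poly_Mapping.single U (s * c))"
    using dis ss by (simp add: gen_def gmult_single s_def[symmetric] mult.assoc[symmetric])
  have IH: "\<phi> (Poly_Mapping.single U (s * c)) = Poly_Mapping.single U ((-1) ^ card (fset U \<inter> Im) * (s * c))"
    using insert by auto
  have cardeq: "card (fset (finsert a U) \<inter> Im) = card (fset U \<inter> Im) + (if a \<in> Im then 1 else 0)"
  proof (cases "a \<in> Im")
    case True
    then have "fset (finsert a U) \<inter> Im = insert a (fset U \<inter> Im)" by auto
    then show ?thesis using True insert by simp
  next
    case False
    then have "fset (finsert a U) \<inter> Im = fset U \<inter> Im" by auto
    then show ?thesis using False by simp
  qed
  have "\<phi> (Poly_Mapping.single (finsert a U) c) = gmult (Poly_Mapping.single {|a|} e) (Poly_Mapping.single U ((-1) ^ card (fset U \<inter> Im) * (s * c)))"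
    using eq1 mult IH e by simp
  also have "\<dots> = Poly_Mapping.single (finsert a U) (s * e * ((-1) ^ card (fset U \<inter> Im) * (s * c)))"
    using dis by (simp add: gmult_single s_def)
  also have "s * e * ((-1) ^ card (fset U \<inter> Im) * (s * c)) = (s * s) * e * (-1) ^ card (fset U \<inter> Im) * c"
    by (simp add: algebra_simps)
  also have "\<dots> = (-1) ^ (card (fset U \<inter> Im) + (if a \<in> Im then 1 else 0)) * c"
    using ss by (simp add: ee)
  also have "\<dots> = (-1) ^ card (fset (finsert a U) \<inter> Im) * c"
    by (simp only: cardeq)
  finally show ?case .
qed


definition relab :: "(nat \<Rightarrow> nat) \<Rightarrow> 'a::field grass \<Rightarrow> 'a grass" where
  "relab r x = (\<Sum>S\<in>Poly_Mapping.keys x. Poly_Mapping.single (fimage r S) (Poly_Mapping.lookup x S))"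

lemma lookup_relab:
  assumes "inj r"
  shows "Poly_Mapping.lookup (relab r x) (fimage r S) = Poly_Mapping.lookup x S"
proof -
  have ij: "inj (fimage r)" using assms by (rule fset.inj_map)
  have "Poly_Mapping.lookup (relab r x) (fimage r S)
      = (\<Sum>T\<in>Poly_Mapping.keys x. if T = S then Poly_Mapping.lookup x T else 0)"
    unfolding relab_def lookup_sum
    by (rule sum.cong) (auto simp: lookup_single when_def dest: injD[OF ij])
  also have "\<dots> = Poly_Mapping.lookup x S" by (simp add: in_keys_iff)
  finally show ?thesis .
qed

lemma lookup_relab_out:
  assumes "\<forall>S. U \<noteq> fimage r S"
  shows "Poly_Mapping.lookup (relab r x) U = 0"
  unfolding relab_def lookup_sum using assms
  by (intro sum.neutral) (auto simp: lookup_single when_def)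

lemma keys_relab:
  assumes "inj r"
  shows "Poly_Mapping.keys (relab r x) = fimage r ` Poly_Mapping.keys x"
proof (intro set_eqI iffI)
  fix U assume U: "U \<in> Poly_Mapping.keys (relab r x)"
  then obtain S where S: "U = fimage r S" using lookup_relab_out[of U r x] by (auto simp: in_keys_iff)
  then have "Poly_Mapping.lookup x S \<noteq> 0" using U lookup_relab[OF assms, of x S] by (simp add: in_keys_iff)
  then show "U \<in> fimage r ` Poly_Mapping.keys x" using S by (auto simp: in_keys_iff)
next
  fix U assume "U \<in> fimage r ` Poly_Mapping.keys x"
  then obtain S where S: "S \<in> Poly_Mapping.keys x" "U = fimage r S" by auto
  have "Poly_Mapping.lookup (relab r x) (fimage r S) = Poly_Mapping.lookup x S" by (rule lookup_relab[OF assms])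
  then show "U \<in> Poly_Mapping.keys (relab r x)" using S by (simp add: in_keys_iff)
qed

lemma relab_zero [simp]: "relab r 0 = 0" by (simp add: relab_def)

lemma relab_add: "relab r (x + y) = relab r x + relab r y"
  unfolding relab_def
  by (rule setsum_keys_plus_distrib) (auto simp: single_add)

lemma relab_sum: "relab r (sum g A) = (\<Sum>a\<in>A. relab r (g a))"
  by (induction A rule: infinite_finite_induct) (auto simp: relab_add)

lemma relab_single [simp]: "relab r (Poly_Mapping.single U c) = Poly_Mapping.single (fimage r U) c"
  by (cases "c = 0") (auto simp: relab_def)

lemma relab_inj0: assumes "inj r" "relab r x = 0" shows "x = 0"
proof (rule poly_mapping_eqI)
  fix S show "Poly_Mapping.lookup x S = Poly_Mapping.lookup 0 S"
    using lookup_relab[OF assms(1), of x S] assms(2) by simp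
qed

lemma gsign_relab:
  assumes "strict_mono r"
  shows "gsign (fimage r S) (fimage r T) = (gsign S T :: 'a::field)"
proof -
  have ij: "inj r" using assms strict_mono_imp_inj_on by blast
  have "{(s,t). s |\<in>| fimage r S \<and> t |\<in>| fimage r T \<and> t < s}
      = (\<lambda>(s,t). (r s, r t)) ` {(s,t). s |\<in>| S \<and> t |\<in>| T \<and> t < s}"
    using assms by (auto simp: strict_mono_less image_iff)
  moreover have "inj_on (\<lambda>(s,t). (r s, r t)) X" for X
    using ij by (auto simp: inj_on_def dest: injD)
  ultimately show ?thesis unfolding gsign_def by (simp add: card_image)
qed

lemma relab_mult:
  assumes "strict_mono r"
  shows "relab r (gmult x y) = gmult (relab r x) (relab r (y :: 'a::field grass))"
proof -
  have ij: "inj r" using assms strict_mono_imp_inj_on by blast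
  have ijf: "inj (fimage r)" using ij by (rule fset.inj_map)
  define F :: "nat fset \<Rightarrow> nat fset \<Rightarrow> 'a \<Rightarrow> 'a \<Rightarrow> 'a grass" where
    "F S T a b = (if S |\<inter>| T = {||} then Poly_Mapping.single (S |\<union>| T) (gsign S T * a * b) else 0)" for S T a b
  have gm: "gmult u v = (\<Sum>S\<in>Poly_Mapping.keys u. \<Sum>T\<in>Poly_Mapping.keys v. F S T (Poly_Mapping.lookup u S) (Poly_Mapping.lookup v T))" for u v
    by (simp add: gmult_def F_def)
  have FR: "F (fimage r S) (fimage r T) a b = relab r (F S T a b)" for S T a b
  proof -
    have "fimage r S |\<inter>| fimage r T = fimage r (S |\<inter>| T)"
      by (rule fset_eqI) (auto dest: injD[OF ij])
    then have "(fimage r S |\<inter>| fimage r T = {||}) = (S |\<inter>| T = {||})" by simp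
    then show ?thesis by (simp add: F_def gsign_relab[OF assms] fimage_funion)
  qed
  have "gmult (relab r x) (relab r y)
     = (\<Sum>S\<in>Poly_Mapping.keys x. \<Sum>T\<in>Poly_Mapping.keys y. F (fimage r S) (fimage r T) (Poly_Mapping.lookup x S) (Poly_Mapping.lookup y T))"
    unfolding gm keys_relab[OF ij]
    by (simp add: sum.reindex[OF inj_on_subset[OF ijf]] lookup_relab[OF ij])
  also have "\<dots> = relab r (gmult x y)"
    unfolding gm FR relab_sum ..
  finally show ?thesis by simp
qed


lemma relab_gsmult: "strict_mono r \<Longrightarrow> relab r (gsmult c z) = gsmult c (relab r z)"
  by (simp add: gsmult_def relab_mult)

lemma relab_gone: "relab r gone = gone"
  by (simp add: gone_def)

lemma relab_gword: "strict_mono r \<Longrightarrow> relab r (gword \<sigma> w) = gword (relab r \<circ> \<sigma>) w"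
  by (induction w) (simp_all add: gword_def relab_gone relab_mult)

lemma relab_geval: "strict_mono r \<Longrightarrow> relab r (geval \<sigma> f) = geval (relab r \<circ> \<sigma>) f"
  by (simp add: geval_def relab_sum relab_gsmult relab_gword)

lemma phi_relab:
  fixes \<phi> :: "'a::field grass \<Rightarrow> 'a grass"
  assumes add: "\<forall>x y. \<phi> (x + y) = \<phi> x + \<phi> y"
    and mult: "\<forall>x y. \<phi> (gmult x y) = gmult (\<phi> x) (\<phi> y)" and inv: "\<forall>x. \<phi> (\<phi> x) = x"
    and sm: "\<forall>c x. \<phi> (gsmult c x) = gsmult c (\<phi> x)"
    and Ip: "\<forall>i\<in>Ip. \<phi> (gen i) = gen i" and Im: "\<forall>i\<in>Im. \<phi> (gen i) = - gen i"
    and r: "strict_mono r" and rIpm: "\<forall>i. r i \<in> Ip \<union> Im" and rD: "\<forall>i. (r i \<in> Im) = (i \<in> D)"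
    and x: "x \<in> Edeg D b"
  shows "\<phi> (relab r x) = (if b then - relab r x else relab r x)"
proof -
  have ij: "inj r" using r strict_mono_imp_inj_on by blast
  have sgn: "(-1::'a) ^ card (fset (fimage r S) \<inter> Im) = (if b then -1 else 1)" if S: "S \<in> Poly_Mapping.keys x" for S
  proof -
    have "fset (fimage r S) \<inter> Im = r ` (fset S \<inter> D)" using rD by auto
    then have "card (fset (fimage r S) \<inter> Im) = card (fset S \<inter> D)"
      using ij by (simp add: card_image inj_on_subset)
    moreover have "odd (card (fset S \<inter> D)) = b" using x S by (simp add: Edeg_def)
    ultimately show ?thesis by (cases b) auto
  qed
  have "\<phi> (relab r x) = (\<Sum>S\<in>Poly_Mapping.keys x. \<phi> (Poly_Mapping.single (fimage r S) (Poly_Mapping.lookup x S)))"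
    unfolding relab_def by (rule phi_sum[OF add])
  also have "\<dots> = (\<Sum>S\<in>Poly_Mapping.keys x. Poly_Mapping.single (fimage r S) ((if b then -1 else 1) * Poly_Mapping.lookup x S))"
  proof (rule sum.cong[OF refl])
    fix S assume S: "S \<in> Poly_Mapping.keys x"
    have "fset (fimage r S) \<subseteq> Ip \<union> Im" using rIpm by auto
    then show "\<phi> (Poly_Mapping.single (fimage r S) (Poly_Mapping.lookup x S)) =
      Poly_Mapping.single (fimage r S) ((if b then -1 else 1) * Poly_Mapping.lookup x S)"
      using phi_single[OF mult inv sm Ip Im] sgn[OF S] by simp
  qed
  also have "\<dots> = (if b then - relab r x else relab r x)"
    by (cases b) (simp_all add: relab_def single_uminus sum_negf)
  finally show ?thesis .
qed

lemma T2_incl: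
  fixes \<phi> :: "'a::field grass \<Rightarrow> 'a grass"
  assumes add: "\<forall>x y. \<phi> (x + y) = \<phi> x + \<phi> y"
    and mult: "\<forall>x y. \<phi> (gmult x y) = gmult (\<phi> x) (\<phi> y)" and inv: "\<forall>x. \<phi> (\<phi> x) = x"
    and sm: "\<forall>c x. \<phi> (gsmult c x) = gsmult c (\<phi> x)"
    and Ip: "\<forall>i\<in>Ip. \<phi> (gen i) = gen i" and Im: "\<forall>i\<in>Im. \<phi> (gen i) = - gen i"
    and r: "strict_mono r" and rIpm: "\<forall>i. r i \<in> Ip \<union> Im" and rD: "\<forall>i. (r i \<in> Im) = (i \<in> D)"
  shows "T2 (Ephi0 \<phi>) (Ephi1 \<phi>) \<subseteq> T2 (Edeg D False) (Edeg D True)"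
proof
  fix f assume f: "f \<in> T2 (Ephi0 \<phi>) (Ephi1 \<phi>)"
  have ij: "inj r" using r strict_mono_imp_inj_on by blast
  show "f \<in> T2 (Edeg D False) (Edeg D True)"
    unfolding T2_def
  proof (intro CollectI allI impI)
    fix \<sigma> :: "gvar \<Rightarrow> 'a grass"
    assume \<sigma>: "(\<forall>i. \<sigma> (Yv i) \<in> Edeg D False) \<and> (\<forall>i. \<sigma> (Zv i) \<in> Edeg D True)"
    have "(\<forall>i. (relab r \<circ> \<sigma>) (Yv i) \<in> Ephi0 \<phi>) \<and> (\<forall>i. (relab r \<circ> \<sigma>) (Zv i) \<in> Ephi1 \<phi>)"
    proof (intro conjI allI)
      fix i
      show "(relab r \<circ> \<sigma>) (Yv i) \<in> Ephi0 \<phi>"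
        using phi_relab[OF add mult inv sm Ip Im r rIpm rD, of "\<sigma> (Yv i)" False] \<sigma> by (simp add: Ephi0_def)
      show "(relab r \<circ> \<sigma>) (Zv i) \<in> Ephi1 \<phi>"
        using phi_relab[OF add mult inv sm Ip Im r rIpm rD, of "\<sigma> (Zv i)" True] \<sigma> by (simp add: Ephi1_def)
    qed
    then have "geval (relab r \<circ> \<sigma>) f = 0" using f by (auto simp: T2_def)
    then have "relab r (geval \<sigma> f) = 0" by (simp add: relab_geval[OF r])
    then show "geval \<sigma> f = 0" by (rule relab_inj0[OF ij])
  qed
qed


lemma exists_r:
  fixes A B :: "nat set"
  assumes A: "finite A" "card A = k" and B: "infinite B" and AB: "A \<inter> B = {}"
  shows "\<exists>r. strict_mono r \<and> (\<forall>i. r i \<in> A \<union> B) \<and> (\<forall>i. (r i \<in> A) = (i < k))"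
proof -
  obtain m where m: "\<forall>a\<in>A. a < m" using A(1) finite_nat_bounded by blast
  define B' where "B' = B \<inter> {m..}"
  have B'inf: "infinite B'"
  proof
    assume "finite B'"
    then have "finite (B' \<union> {..<m})" by simp
    moreover have "B \<subseteq> B' \<union> {..<m}" unfolding B'_def by auto
    ultimately show False using B finite_subset by blast
  qed
  define r where "r i = (if i < k then enumerate A i else enumerate B' (i - k))" for i
  have rA: "i < k \<Longrightarrow> r i \<in> A" for i unfolding r_def using A by (simp add: finite_enumerate_in_set)
  have rB: "\<not> i < k \<Longrightarrow> r i \<in> B'" for i unfolding r_def using B'inf by (simp add: enumerate_in_set)
  have "strict_mono r"
  proof (rule strict_monoI)
    fix i j :: nat assume ij: "i < j"
    show "r i < r j"
    proof (cases "j < k")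
      case True
      then show ?thesis using ij A unfolding r_def by (simp add: finite_enumerate_mono)
    next
      case False
      show ?thesis
      proof (cases "i < k")
        case True
        then have "r i < m" using rA m by blast
        moreover have "m \<le> r j" using rB[OF False] B'_def by auto
        ultimately show ?thesis by simp
      next
        case False
        then show ?thesis using ij \<open>\<not> j < k\<close> B'inf unfolding r_def by (simp add: enumerate_mono)
      qed
    qed
  qed
  moreover have "\<forall>i. r i \<in> A \<union> B" using rA rB B'_def by blast
  moreover have "\<forall>i. (r i \<in> A) = (i < k)" using rA rB AB B'_def by blast
  ultimately show ?thesis by blast
qed

theorem mainTheorem5:
  fixes \<phi> :: "'a::field_char_0 grass \<Rightarrow> 'a grass"
  assumes aut: "grass_aut \<phi>"
    and inv: "\<forall>x. \<phi> (\<phi> x) = x"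
  defines
 "Ip \<equiv> {i. \<phi> (gen i) = gen i}"
    and "Im \<equiv> {i. \<phi> (gen i) = - gen i}"
    and "J \<equiv> UNIV - {n. \<phi> (gen n) = gen n \<or> \<phi> (gen n) = - gen n}"
  shows "(\<forall>k. infinite Ip \<and> finite Im \<and> card Im = k \<and> infinite J
            \<longrightarrow> T2 (Ephi0 \<phi>) (Ephi1 \<phi>) \<subseteq> T2 (Eks0 k) (Eks1 k))
       \<and> (\<forall>k. finite Ip \<and> card Ip = k \<and> infinite Im \<and> infinite J
            \<longrightarrow> T2 (Ephi0 \<phi>) (Ephi1 \<phi>) \<subseteq> T2 (Ek0 k) (Ek1 k))"
proof -
  have add: "\<forall>x y. \<phi> (x + y) = \<phi> x + \<phi> y"
    and sm: "\<forall>c x. \<phi> (gsmult c x) = gsmult c (\<phi> x)"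
    and mult: "\<forall>x y. \<phi> (gmult x y) = gmult (\<phi> x) (\<phi> y)"
    using aut by (auto simp: grass_aut_def)
  have IpP: "\<forall>i\<in>Ip. \<phi> (gen i) = gen i" by (simp add: Ip_def)
  have ImP: "\<forall>i\<in>Im. \<phi> (gen i) = - gen i" by (simp add: Im_def)
  have disj: "Ip \<inter> Im = {}"
  proof (rule ccontr)
    assume "Ip \<inter> Im \<noteq> {}"
    then obtain i where "\<phi> (gen i) = gen i" "\<phi> (gen i) = - gen i" unfolding Ip_def Im_def by blast
    then have "Poly_Mapping.lookup (gen i :: 'a grass) {|i|} = Poly_Mapping.lookup (- gen i) {|i|}" by simp
    then show False by (simp add: gen_def lookup_uminus)
  qed
  show ?thesis
  proof (intro conjI allI impI)
    fix k assume h: "infinite Ip \<and> finite Im \<and> card Im = k \<and> infinite J"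
    obtain r where r: "strict_mono r" "\<forall>i. r i \<in> Im \<union> Ip" "\<forall>i. (r i \<in> Im) = (i < k)"
      using exists_r[of Im k Ip] h disj by blast
    have rIpm: "\<forall>i. r i \<in> Ip \<union> Im" using r(2) by blast
    have rD: "\<forall>i. (r i \<in> Im) = (i \<in> {..<k})" using r(3) by simp
    show "T2 (Ephi0 \<phi>) (Ephi1 \<phi>) \<subseteq> T2 (Eks0 k) (Eks1 k)"
      unfolding Eks0_def Eks1_def by (rule T2_incl[OF add mult inv sm IpP ImP r(1) rIpm rD])
  next
    fix k assume h: "finite Ip \<and> card Ip = k \<and> infinite Im \<and> infinite J"
    obtain r where r: "strict_mono r" "\<forall>i. r i \<in> Ip \<union> Im" "\<forall>i. (r i \<in> Ip) = (i < k)"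
      using exists_r[of Ip k Im] h disj by blast
    have rD: "\<forall>i. (r i \<in> Im) = (i \<in> {k..})" using r(2,3) disj by (metis IntI UnE atLeast_iff empty_iff not_le)
    show "T2 (Ephi0 \<phi>) (Ephi1 \<phi>) \<subseteq> T2 (Ek0 k) (Ek1 k)"
      unfolding Ek0_def Ek1_def by (rule T2_incl[OF add mult inv sm IpP ImP r(1) r(2) rD])
  qed
qed

end
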